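(* For every partition $\lambda$ with $l(\lambda)=l$, $$D(\alpha)q_\lambda=\left[e_\lambda(\alpha)+2\alpha\sum_{1\le i<j\le l}\left(\frac{(\lambda_i-\lambda_j)R_{ij}}{1-R_{ij}}+\frac{2R_{ij}}{(1-R_{ij})^2}\right)\right]q_\lambda,$$ where the rational expressions in $R_{ij}$ are expanded as power series, $\frac{R}{1-R}=\sum_{k\ge1}R^k$ and $\frac{R}{(1-R)^2}=\sum_{k\ge1}kR^k$, and $e_\lambda(\alpha)=\alpha^2\sum_i\lambda_i^2+\alpha(|\lambda|-2\sum_i i\lambda_i)$.
   Context: $F=\mathbb{Q}(\alpha)$, $\Lambda_F=F[p_1,p_2,\dots]$ with $p_n$ the power sums. For a partition $\lambda$, $l(\lambda)$ is its number of parts and $z_\lambda=\prod_i i^{m_i}m_i!$. $Q_n(\alpha)=\sum_{\lambda\vdash n}\alpha^{-l(\lambda)}z_\lambda^{-1}p_\lambda$ ($Q_0=1$, $Q_n=0$ for $n<0$) and $q_\lambda=Q_{\lambda_1}Q_{\lambda_2}\cdots$. The raising operator $R_{ij}$ ($i<j$) acts by $R_{ij}^kq_\lambda=Q_{\lambda_1}\cdots Q_{\lambda_i+k}\cdots Q_{\lambda_j-k}\cdots Q_{\lambda_l}$ (only the $i$-th and $j$-th factors changed), which is $0$ when $k>\lambda_j$. The operator $$D(\alpha)=\sum_{i,j\ge1}(i+j)\alpha\,p_ip_j\frac{\partial}{\partial p_{i+j}}+\sum_{i,j\ge1}ij\alpha^2p_{i+j}\frac{\partial^2}{\partial p_i\partial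 p_j}+\alpha(\alpha-1)\sum_{k\ge1}k^2p_k\frac{\partial}{\partial p_k}.$$ *)

theory Defs
  imports "HOL-Library.Poly_Mapping" "HOL-Computational_Algebra.Polynomial"
    "HOL-Computational_Algebra.Fraction_Field"
begin

text \<open>The coefficient field F = Q(alpha): rational functions in one indeterminate over Q.\<close>
type_synonym F = "rat poly fract"

definition alpha :: F where
  "alpha = Fract [:0, 1:] 1"

text \<open>Lambda_F = F[p_1, p_2, ...]: polynomials in variables indexed by nat
  (index 0 is never used).  A monomial is a finitely supported exponent map.\<close>
type_synonym sym = "(nat \<Rightarrow>\<^sub>0 nat) \<Rightarrow>\<^sub>0 F"

definition const :: "F \<Rightarrow> sym" where
  "const c = Poly_Mapping.single 0 c"

definition pvar :: "nat \<Rightarrow> sym" where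
  "pvar n = Poly_Mapping.single (Poly_Mapping.single n 1) 1"

definition dp :: "nat \<Rightarrow> sym \<Rightarrow> sym" where
  "dp k f = Abs_poly_mapping
     (\<lambda>m::nat \<Rightarrow>\<^sub>0 nat. of_nat (Poly_Mapping.lookup m k + 1) * Poly_Mapping.lookup f (m + Poly_Mapping.single k (1::nat)))"

text \<open>The operator D(alpha).  The sums over i, j, k \<ge> 1 are formally infinite, but
  on any element only finitely many terms are nonzero; Sum_any sums exactly those.\<close>
definition Dop :: "sym \<Rightarrow> sym" where
  "Dop f =
     Sum_any (\<lambda>(i, j). if 1 \<le> i \<and> 1 \<le> j
        then const (of_nat (i + j) * alpha) * (pvar i * pvar j * dp (i + j) f) else 0)
   + Sum_any (\<lambda>(i, j). if 1 \<le> i \<and> 1 \<le> j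
        then const (of_nat (i * j) * alpha ^ 2) * (pvar (i + j) * dp i (dp j f)) else 0)
   + const (alpha * (alpha - 1)) *
       Sum_any (\<lambda>k. if 1 \<le> k then const (of_nat (k ^ 2)) * (pvar k * dp k f) else 0)"

text \<open>Partitions of n encoded by multiplicity maps m (m_i = multiplicity of part i).\<close>
definition part_mults :: "nat \<Rightarrow> (nat \<Rightarrow>\<^sub>0 nat) set" where
  "part_mults n = {m. Poly_Mapping.lookup m 0 = 0 \<and> (\<Sum>i\<in>Poly_Mapping.keys m. i * Poly_Mapping.lookup m i) = n}"

definition zee :: "(nat \<Rightarrow>\<^sub>0 nat) \<Rightarrow> nat" where
  "zee m = (\<Prod>i\<in>Poly_Mapping.keys m. i ^ Poly_Mapping.lookup m i * fact (Poly_Mapping.lookup m i))"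

definition len :: "(nat \<Rightarrow>\<^sub>0 nat) \<Rightarrow> nat" where
  "len m = (\<Sum>i\<in>Poly_Mapping.keys m. Poly_Mapping.lookup m i)"

definition Qf :: "int \<Rightarrow> sym" where
  "Qf n = (if n < 0 then 0 else
     (\<Sum>m\<in>part_mults (nat n).
        const (inverse (alpha ^ len m * of_nat (zee m))) * Poly_Mapping.single m 1))"

definition qlist :: "int list \<Rightarrow> sym" where
  "qlist xs = prod_list (map Qf xs)"

definition is_partition :: "nat list \<Rightarrow> bool" where
  "is_partition lam \<longleftrightarrow> sorted_wrt (\<ge>) lam \<and> (\<forall>x\<in>set lam. 0 < x)"

text \<open>R_ij^k q_lam for 1 \<le> i < j \<le> l (1-based indices): raise the i-th index by k,
  lower the j-th by k; zero when k exceeds lam_j (since then Q of a negative index).\<close>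
definition Rop :: "nat \<Rightarrow> nat \<Rightarrow> nat \<Rightarrow> nat list \<Rightarrow> sym" where
  "Rop i j k lam =
     qlist ((map int lam)[i - 1 := int (lam ! (i - 1)) + int k,
                          j - 1 := int (lam ! (j - 1)) - int k])"

definition e_lam :: "nat list \<Rightarrow> F" where
  "e_lam lam = alpha ^ 2 * of_nat (\<Sum>x\<leftarrow>lam. x ^ 2)
     + alpha * (of_nat (sum_list lam) - 2 * of_nat (\<Sum>i<length lam. (i + 1) * lam ! i))"

end

theory Submission
  imports Defs
begin


abbreviation lk where "lk \<equiv> Poly_Mapping.lookup"
abbreviation sg where "sg \<equiv> Poly_Mapping.single"

lemma alpha_nz: "alpha \<noteq> 0"
  unfolding alpha_def by (simp add: Zero_fract_def eq_fract)

lemma const_mult: "const (a * b) = const a * const b"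
  by (simp add: const_def mult_single)
lemma const_add: "const (a + b) = const a + const b"
  by (simp add: const_def single_add)
lemma const_diff: "const (a - b) = const a - const b"
  by (simp add: const_def single_diff)
lemma const_0[simp]: "const 0 = 0" by (simp add: const_def)
lemma const_1[simp]: "const 1 = 1" by (simp add: const_def)
lemma const_uminus: "const (- a) = - const a" by (simp add: const_def single_uminus)
lemma const_sum: "const (sum f A) = (\<Sum>x\<in>A. const (f x))"
  by (induction A rule: infinite_finite_induct) (auto simp: const_add)
lemma const_of_nat: "const (of_nat n) = of_nat n"
  by (simp add: const_def)
lemma const_of_int: "const (of_int n) = of_int n"
  by (simp add: const_def)

lemma lookup_const_mult: "lk (const c * f) m = c * lk f m"
proof -
  have "const c * f = Poly_Mapping.map ((*) c) f"
    by (simp add: const_def mult_map_scale_conv_mult)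
  then show ?thesis by (simp add: map.rep_eq when_def)
qed

lemma poly_mapping_monos: "f = (\<Sum>m\<in>Poly_Mapping.keys f. sg m (lk f m))"
  by (rule poly_mapping_eqI) (auto simp: lookup_sum lookup_single when_def in_keys_iff
      sum.delta)

lemma lookup_dp: "lk (dp k f) m = of_nat (lk m k + 1) * lk f (m + sg k 1)"
proof -
  have "finite {m. lk f (m + sg k (1::nat)) \<noteq> 0}"
  proof -
    have "{m. lk f (m + sg k (1::nat)) \<noteq> 0} = (\<lambda>m. m + sg k 1) -` Poly_Mapping.keys f"
      by (auto simp: in_keys_iff)
    moreover have "inj (\<lambda>m::nat\<Rightarrow>\<^sub>0nat. m + sg k 1)" by (auto intro: injI)
    ultimately show ?thesis by (simp add: finite_vimageI)
  qed
  then have "finite {m. of_nat (lk m k + 1) * lk f (m + sg k (1::nat)) \<noteq> 0}"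
    by (rule rev_finite_subset) auto
  then show ?thesis unfolding dp_def by simp
qed

lemma dp_add: "dp k (f + g) = dp k f + dp k g"
  by (rule poly_mapping_eqI) (simp add: lookup_dp lookup_add algebra_simps)
lemma dp_diff: "dp k (f - g) = dp k f - dp k g"
  by (rule poly_mapping_eqI) (simp add: lookup_dp lookup_minus algebra_simps)
lemma dp_0[simp]: "dp k 0 = 0"
  by (rule poly_mapping_eqI) (simp add: lookup_dp)
lemma dp_uminus: "dp k (- f) = - dp k f"
  by (rule poly_mapping_eqI) (simp add: lookup_dp)
lemma dp_sum: "dp k (sum f A) = (\<Sum>x\<in>A. dp k (f x))"
  by (induction A rule: infinite_finite_induct) (auto simp: dp_add)
lemma dp_cmult: "dp k (const c * f) = const c * dp k f"
  by (rule poly_mapping_eqI) (simp add: lookup_dp lookup_const_mult mult.left_commute)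

lemma add_single_eq_iff:
  "(m' + sg k (1::nat) = m) \<longleftrightarrow> (lk m k \<noteq> 0 \<and> m' = m - sg k 1)"
proof
  assume h: "m' + sg k 1 = m"
  then have "lk m k \<noteq> 0" by (auto simp: lookup_add)
  moreover have "m' = m - sg k 1" using h add_diff_cancel_right'[of m' "sg k 1"] by simp
  ultimately show "lk m k \<noteq> 0 \<and> m' = m - sg k 1" by simp
next
  assume h: "lk m k \<noteq> 0 \<and> m' = m - sg k 1"
  show "m' + sg k 1 = m"
  proof (rule poly_mapping_eqI)
    fix x show "lk (m' + sg k 1) x = lk m x"
      using h by (cases "x = k") (simp_all add: lookup_add lookup_minus lookup_single)
  qed
qed

lemma dp_single: "dp k (sg m c) = (if lk m k = 0 then 0 else sg (m - sg k 1) (of_nat (lk m k) * c))"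
proof (rule poly_mapping_eqI)
  fix m'
  show "lk (dp k (sg m c)) m' = lk (if lk m k = 0 then 0 else sg (m - sg k 1) (of_nat (lk m k) * c)) m'"
  proof (cases "m' + sg k 1 = m")
    case True
    then have a: "lk m k \<noteq> 0" "m' = m - sg k 1" using add_single_eq_iff[of m' k m] True by simp_all
    have b: "lk m k = lk m' k + 1" using True by (auto simp: lookup_add)
    have "lk (dp k (sg m c)) m' = of_nat (lk m k) * c"
      unfolding lookup_dp using True b by simp
    then show ?thesis using a by simp
  next
    case False
    then have c: "m - sg k 1 \<noteq> m' \<or> lk m k = 0" using add_single_eq_iff[of m' k m] False by auto
    have "lk (dp k (sg m c)) m' = 0"
      unfolding lookup_dp using False by (simp add: lookup_single when_def)
    then show ?thesis using c by (auto simp: lookup_single when_def)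
  qed
qed

lemma dp_const[simp]: "dp k (const c) = 0"
  by (simp add: const_def dp_single)
lemma dp_1[simp]: "dp k 1 = 0"
  using dp_const[of k 1] by simp

lemma dp_pvar: "dp k (pvar n) = (if n = k then 1 else 0)"
  by (auto simp: pvar_def dp_single lookup_single)

lemma dp_mono_mult: "dp k (sg m a * sg m' b) = dp k (sg m a) * sg m' b + sg m a * dp k (sg m' b)"
proof -
  have e: "lk m k \<noteq> 0 \<Longrightarrow> m + m' - sg k 1 = (m - sg k 1) + m'" for m m' :: "nat \<Rightarrow>\<^sub>0 nat"
    by (rule poly_mapping_eqI) (auto simp: lookup_add lookup_minus lookup_single when_def)
  have e2: "lk m' k \<noteq> 0 \<Longrightarrow> m + m' - sg k 1 = m + (m' - sg k 1)"
    by (rule poly_mapping_eqI) (auto simp: lookup_add lookup_minus lookup_single when_def)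
  have la: "lk (m + m') k = lk m k + lk m' k" by (simp add: lookup_add)
  show ?thesis
  proof (cases "lk m k = 0")
    case True
    show ?thesis
    proof (cases "lk m' k = 0")
      case True2: True
      show ?thesis using True True2 la by (simp add: mult_single dp_single)
    next
      case False
      show ?thesis using True False la by (simp add: mult_single dp_single e2[simplified] mult.left_commute)
    qed
  next
    case False
    show ?thesis
    proof (cases "lk m' k = 0")
      case True2: True
      show ?thesis using True2 False la by (simp add: mult_single dp_single e[simplified] mult.assoc)
    next
      case False2: False
      have "dp k (sg m a * sg m' b) = sg (m + m' - sg k 1) (of_nat (lk m k) * (a * b) + of_nat (lk m' k) * (a*b))"
        using False la by (simp add: mult_single dp_single algebra_simps)
      also have "\<dots> = sg (m + m' - sg k 1) (of_nat (lk m k) * (a * b)) + sg (m + m' - sg k 1) (of_nat (lk m' k) * (a*b))"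
        by (simp add: single_add)
      finally have X: "dp k (sg m a * sg m' b) = sg (m + m' - sg k 1) (of_nat (lk m k) * (a * b)) + sg (m + m' - sg k 1) (of_nat (lk m' k) * (a*b))" .
      have E1: "m - sg k (Suc 0) + m' = m + m' - sg k (Suc 0)" using e[OF False] by simp
      have E2: "m + (m' - sg k (Suc 0)) = m + m' - sg k (Suc 0)" using e2[OF False2] by simp
      show ?thesis unfolding X using False False2 by (simp add: mult_single dp_single E1 E2 mult.assoc mult.left_commute)
    qed
  qed
qed

lemma dp_mult: "dp k (f * g) = dp k f * g + f * dp k g"
proof -
  have "dp k (f * g) = dp k ((\<Sum>m\<in>Poly_Mapping.keys f. sg m (lk f m)) * (\<Sum>m\<in>Poly_Mapping.keys g. sg m (lk g m)))"
    by (simp flip: poly_mapping_monos)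
  also have "\<dots> = (\<Sum>m\<in>Poly_Mapping.keys f. \<Sum>m'\<in>Poly_Mapping.keys g. dp k (sg m (lk f m) * sg m' (lk g m')))"
    by (simp add: sum_product dp_sum)
  also have "\<dots> = (\<Sum>m\<in>Poly_Mapping.keys f. \<Sum>m'\<in>Poly_Mapping.keys g.
      dp k (sg m (lk f m)) * sg m' (lk g m') + sg m (lk f m) * dp k (sg m' (lk g m')))"
    by (simp add: dp_mono_mult)
  also have "\<dots> = dp k (\<Sum>m\<in>Poly_Mapping.keys f. sg m (lk f m)) * (\<Sum>m\<in>Poly_Mapping.keys g. sg m (lk g m))
      + (\<Sum>m\<in>Poly_Mapping.keys f. sg m (lk f m)) * dp k (\<Sum>m\<in>Poly_Mapping.keys g. sg m (lk g m))"
    by (simp add: sum_product dp_sum sum.distrib)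
  finally show ?thesis by (simp flip: poly_mapping_monos)
qed

lemma dp_commute: "dp i (dp j f) = dp j (dp i f)"
proof (cases "i = j")
  case False
  show ?thesis
  proof (rule poly_mapping_eqI)
    fix m
    have c: "m + sg i 1 + sg j 1 = m + sg j 1 + sg i (1::nat)" by (simp add: add_ac)
    have "lk (dp i (dp j f)) m = of_nat (lk m i + 1) * (of_nat (lk m j + 1) * lk f (m + sg i 1 + sg j 1))"
      using False by (simp add: lookup_dp lookup_add lookup_single)
    also have "\<dots> = of_nat (lk m j + 1) * (of_nat (lk m i + 1) * lk f (m + sg j 1 + sg i 1))"
      by (simp only: c mult.left_commute)
    also have "\<dots> = lk (dp j (dp i f)) m"
      using False by (simp add: lookup_dp lookup_add lookup_single)
    finally show "lk (dp i (dp j f)) m = lk (dp j (dp i f)) m" .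
  qed
qed simp


definition W :: "(nat \<Rightarrow>\<^sub>0 nat) \<Rightarrow> nat" where
  "W m = (\<Sum>i\<in>Poly_Mapping.keys m. i * lk m i)"

lemma pm_iff: "m \<in> part_mults n \<longleftrightarrow> lk m 0 = 0 \<and> W m = n"
  by (simp add: part_mults_def W_def)

lemma W_superset: "finite S \<Longrightarrow> Poly_Mapping.keys m \<subseteq> S \<Longrightarrow> W m = (\<Sum>i\<in>S. i * lk m i)"
  unfolding W_def by (rule sum.mono_neutral_left) (auto simp: in_keys_iff)
lemma len_superset: "finite S \<Longrightarrow> Poly_Mapping.keys m \<subseteq> S \<Longrightarrow> len m = (\<Sum>i\<in>S. lk m i)"
  unfolding len_def by (rule sum.mono_neutral_left) (auto simp: in_keys_iff)
lemma zee_superset: "finite S \<Longrightarrow> Poly_Mapping.keys m \<subseteq> S \<Longrightarrow>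
   zee m = (\<Prod>i\<in>S. i ^ lk m i * fact (lk m i))"
  unfolding zee_def by (rule prod.mono_neutral_left) (auto simp: in_keys_iff)

lemma pm_keys: assumes "m \<in> part_mults n" shows "Poly_Mapping.keys m \<subseteq> {1..n}"
  and "lk m i \<le> n"
proof -
  have z: "lk m 0 = 0" and w: "(\<Sum>i\<in>Poly_Mapping.keys m. i * lk m i) = n"
    using assms by (auto simp: part_mults_def)
  have le: "i * lk m i \<le> n" for i
  proof (cases "i \<in> Poly_Mapping.keys m")
    case True
    then show ?thesis using w member_le_sum[of i "Poly_Mapping.keys m" "\<lambda>i. i * lk m i"] by simp
  next
    case False then show ?thesis by (simp add: in_keys_iff)
  qed
  show "Poly_Mapping.keys m \<subseteq> {1..n}"
  proof
    fix i assume i: "i \<in> Poly_Mapping.keys m"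
    then have "lk m i \<ge> 1" by (auto simp: in_keys_iff)
    have "i \<noteq> 0"
    proof
      assume "i = 0" then show False using i z by (simp add: in_keys_iff)
    qed
    moreover have "i * lk m i \<le> n" by (rule le)
    moreover have "i \<le> i * lk m i" using \<open>lk m i \<ge> 1\<close> by simp
    ultimately have "i \<le> n" "i \<noteq> 0" by linarith+
    then show "i \<in> {1..n}" by simp
  qed
  show "lk m i \<le> n"
  proof (cases "i = 0")
    case True then show ?thesis using z by simp
  next
    case False
    then have "lk m i \<le> i * lk m i" by simp
    then show ?thesis using le[of i] by linarith
  qed
qed

lemma pm_finite: "finite (part_mults n)"
proof -
  let ?F = "{f. \<forall>x. (x \<in> {1..n} \<longrightarrow> f x \<in> {0..n}) \<and> (x \<notin> {1..n} \<longrightarrow> f x = (0::nat))}"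
  have "finite ?F" using finite_set_of_finite_funs[of "{1..n}" "{0..n}" 0] by simp
  moreover have "inj (lk :: (nat \<Rightarrow>\<^sub>0 nat) \<Rightarrow> _)" by (rule injI, rule poly_mapping_eqI) simp
  ultimately have "finite (lk -` ?F)" by (rule finite_vimageI)
  moreover have "part_mults n \<subseteq> lk -` ?F"
  proof
    fix m assume m: "m \<in> part_mults n"
    have "x \<notin> {1..n} \<Longrightarrow> lk m x = 0" for x using pm_keys(1)[OF m] by (auto simp: in_keys_iff)
    then show "m \<in> lk -` ?F" using pm_keys(2)[OF m] by simp
  qed
  ultimately show ?thesis by (rule finite_subset[rotated])
qed

definition cQ :: "(nat \<Rightarrow>\<^sub>0 nat) \<Rightarrow> F" where
  "cQ m = inverse (alpha ^ len m * of_nat (zee m))"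

lemma Qf_nat: "Qf (int n) = (\<Sum>m\<in>part_mults n. sg m (cQ m))"
  by (simp add: Qf_def cQ_def const_def mult_single)

lemma Qf_neg: "x < 0 \<Longrightarrow> Qf x = 0" by (simp add: Qf_def)

lemma zee_nz: "lk m 0 = 0 \<Longrightarrow> zee m \<noteq> 0"
  unfolding zee_def by (auto simp: in_keys_iff)

lemma shift_facts:
  fixes m' :: "nat \<Rightarrow>\<^sub>0 nat" assumes k: "k \<ge> 1"
  shows "W (m' + sg k 1) = W m' + k" "len (m' + sg k 1) = len m' + 1"
    "zee (m' + sg k 1) = zee m' * (k * (lk m' k + 1))"
    "lk (m' + sg k 1) 0 = lk m' 0" "lk (m' + sg k 1) k = lk m' k + 1"
proof -
  let ?S = "insert k (Poly_Mapping.keys m')"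
  have fin: "finite ?S" by simp
  have ks: "Poly_Mapping.keys (m' + sg k 1) \<subseteq> ?S" "Poly_Mapping.keys m' \<subseteq> ?S"
    using keys_add[of m' "sg k 1"] by auto
  have l: "lk (m' + sg k 1) i = lk m' i + (if i = k then 1 else 0)" for i
    by (simp add: lookup_add lookup_single when_def)
  have l': "lk (m' + sg k (Suc 0)) i = lk m' i + (if i = k then 1 else 0)" for i
    using l[of i] by simp
  show "lk (m' + sg k 1) 0 = lk m' 0" using k l[of 0] by simp
  show "lk (m' + sg k 1) k = lk m' k + 1" using l[of k] by simp
  have ww: "(\<lambda>i. i * lk (m' + sg k 1) i) = (\<lambda>i. i * lk m' i + (if i = k then k else 0))"
    by (rule ext, unfold l) simp
  show "W (m' + sg k 1) = W m' + k"
    unfolding W_superset[OF fin ks(1)] W_superset[OF fin ks(2)] ww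
    by (simp add: sum.distrib sum.delta)
  show "len (m' + sg k 1) = len m' + 1"
    unfolding len_superset[OF fin ks(1)] len_superset[OF fin ks(2)] l
    by (simp add: sum.distrib sum.delta)
  have "zee (m' + sg k 1) = (\<Prod>i\<in>?S. i ^ lk (m' + sg k 1) i * fact (lk (m' + sg k 1) i))"
    by (rule zee_superset[OF fin ks(1)])
  also have "\<dots> = (k ^ (lk m' k + 1) * fact (lk m' k + 1)) * (\<Prod>i\<in>?S - {k}. i ^ lk m' i * fact (lk m' i))"
    by (subst prod.remove[of _ k]) (auto simp: l' intro!: prod.cong)
  also have "\<dots> = (k * (lk m' k + 1)) * ((k ^ lk m' k * fact (lk m' k)) * (\<Prod>i\<in>?S - {k}. i ^ lk m' i * fact (lk m' i)))"
    by (simp add: algebra_simps)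
  also have "(k ^ lk m' k * fact (lk m' k)) * (\<Prod>i\<in>?S - {k}. i ^ lk m' i * fact (lk m' i)) = zee m'"
    unfolding zee_superset[OF fin ks(2)] by (subst prod.remove[of _ k]) auto
  finally show "zee (m' + sg k 1) = zee m' * (k * (lk m' k + 1))" by simp
qed


lemma cQ_shift:
  assumes k: "k \<ge> 1" and z: "lk a 0 = 0"
  shows "of_nat (lk a k + 1) * cQ (a + sg k 1) = inverse (alpha * of_nat k) * cQ a"
proof -
  have nz: "(of_nat (zee a) :: F) \<noteq> 0" using zee_nz[OF z] by simp
  have nk: "(of_nat k :: F) \<noteq> 0" using k by simp
  have nl: "(of_nat (lk a k + 1) :: F) \<noteq> 0" by (simp del: of_nat_Suc)
  have gen: "s * inverse (al ^ (L + 1) * (Z * (K * s))) = inverse (al * K) * inverse (al ^ L * Z)"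
    if "s \<noteq> 0" "K \<noteq> 0" "Z \<noteq> 0" "al \<noteq> 0" for s K Z al :: F and L
    using that by (simp add: inverse_mult_distrib power_add)
  show ?thesis
    unfolding cQ_def shift_facts[OF k] of_nat_mult
    by (rule gen[OF nl nk nz alpha_nz])
qed

lemma dp_Qf_nat:
  assumes k: "k \<ge> 1"
  shows "dp k (Qf (int n)) = const (inverse (alpha * of_nat k)) * Qf (int n - int k)"
proof -
  let ?e = "sg k (1::nat)"
  let ?c = "inverse (alpha * of_nat k)"
  let ?T = "{m\<in>part_mults n. lk m k \<noteq> 0}"
  have "dp k (Qf (int n)) = (\<Sum>m\<in>part_mults n. if lk m k \<noteq> 0 then sg (m - ?e) (of_nat (lk m k) * cQ m) else 0)"
    by (auto simp: Qf_nat dp_sum dp_single intro!: sum.cong)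
  also have "\<dots> = (\<Sum>m\<in>?T. sg (m - ?e) (of_nat (lk m k) * cQ m))"
    by (rule sum.inter_filter[OF pm_finite, symmetric])
  finally have L: "dp k (Qf (int n)) = (\<Sum>m\<in>?T. sg (m - ?e) (of_nat (lk m k) * cQ m))" .
  show ?thesis
  proof (cases "k \<le> n")
    case False
    have "?T = {}"
    proof (rule ccontr)
      assume "?T \<noteq> {}"
      then obtain m where m: "m \<in> part_mults n" "lk m k \<noteq> 0" by blast
      then have "k \<in> Poly_Mapping.keys m" by (simp add: in_keys_iff)
      then show False using pm_keys(1)[OF m(1)] False by auto
    qed
    then show ?thesis using L False by (simp add: Qf_neg)
  next
    case True
    have R: "const ?c * Qf (int n - int k) = (\<Sum>m\<in>part_mults (n - k). sg m (?c * cQ m))"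
    proof -
      have "int n - int k = int (n - k)" using True by simp
      then show ?thesis by (simp only: Qf_nat sum_distrib_left const_def mult_single add_0)
    qed
    have "(\<Sum>m\<in>part_mults (n - k). sg m (?c * cQ m)) = (\<Sum>m\<in>?T. sg (m - ?e) (of_nat (lk m k) * cQ m))"
    proof (rule sum.reindex_bij_witness[where i = "\<lambda>m. m - ?e" and j = "\<lambda>m. m + ?e"])
      fix a assume a: "a \<in> part_mults (n - k)"
      show "a + ?e - ?e = a" by simp
      show "a + ?e \<in> ?T" using a True shift_facts[OF k, of a] by (simp add: pm_iff)
      have z: "lk a 0 = 0" using a by (simp add: pm_iff)
      show "sg (a + ?e - ?e) (of_nat (lk (a + ?e) k) * cQ (a + ?e)) = sg a (?c * cQ a)"
        using cQ_shift[OF k z] shift_facts(5)[OF k, of a] by simp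
    next
      fix b assume b: "b \<in> ?T"
      then have bk: "lk b k \<noteq> 0" by simp
      have bb: "b - ?e + ?e = b" using add_single_eq_iff[of "b - ?e" k b] bk by blast
      then show "b - ?e + ?e = b" .
      have "lk (b - ?e + ?e) 0 = 0" "W (b - ?e + ?e) = n" using b bb by (simp_all add: pm_iff)
      then show "b - ?e \<in> part_mults (n - k)"
        using shift_facts[OF k, of "b - ?e"] by (simp add: pm_iff)
    qed
    then show ?thesis using L R by simp
  qed
qed


lemma sg_sum: "sg m (sum f A) = (\<Sum>x\<in>A. sg m (f x))"
  by (induction A rule: infinite_finite_induct) (auto simp: single_add)

lemma const_sg: "const c * sg m d = sg m (c * d)"
  by (simp add: const_def mult_single)

lemma pvar_dp_single: "pvar k * dp k (sg m c) = sg m (of_nat (lk m k) * c)"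
proof (cases "lk m k = 0")
  case True then show ?thesis by (simp add: dp_single)
next
  case False
  have "m - sg k 1 + sg k 1 = m" using add_single_eq_iff[of "m - sg k 1" k m] False by blast
  then have "sg k 1 + (m - sg k 1) = m" by (simp add: add.commute)
  then show ?thesis using False by (simp add: dp_single pvar_def mult_single)
qed

lemma euler:
  "(\<Sum>k\<in>{1..n}. const (of_nat k) * (pvar k * dp k (Qf (int n)))) = const (of_nat n) * Qf (int n)"
proof -
  have "(\<Sum>k\<in>{1..n}. const (of_nat k) * (pvar k * dp k (Qf (int n))))
      = (\<Sum>k\<in>{1..n}. \<Sum>m\<in>part_mults n. sg m (of_nat k * (of_nat (lk m k) * cQ m)))"
    by (simp add: Qf_nat dp_sum sum_distrib_left pvar_dp_single const_sg)
  also have "\<dots> = (\<Sum>m\<in>part_mults n. sg m (\<Sum>k\<in>{1..n}. of_nat k * (of_nat (lk m k) * cQ m)))"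
    by (subst sum.swap) (simp add: sg_sum)
  also have "\<dots> = (\<Sum>m\<in>part_mults n. sg m (of_nat n * cQ m))"
  proof (rule sum.cong[OF refl])
    fix m assume m: "m \<in> part_mults n"
    have wsum: "W m = (\<Sum>k\<in>{1..n}. k * lk m k)" by (rule W_superset[OF _ pm_keys(1)[OF m]]) simp
    have wn: "W m = n" using m by (simp add: pm_iff)
    have "(\<Sum>k\<in>{1..n}. of_nat k * (of_nat (lk m k) * cQ m)) = of_nat (W m) * (cQ m :: F)"
      unfolding wsum by (simp add: sum_distrib_right of_nat_sum mult.assoc)
    then have "(\<Sum>k\<in>{1..n}. of_nat k * (of_nat (lk m k) * cQ m)) = (of_nat n * cQ m :: F)"
      unfolding wn .
    then show "sg m (\<Sum>k\<in>{1..n}. of_nat k * (of_nat (lk m k) * cQ m)) = sg m (of_nat n * cQ m)" by simp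
  qed
  also have "\<dots> = const (of_nat n) * Qf (int n)"
    by (simp add: Qf_nat sum_distrib_left const_sg)
  finally show ?thesis .
qed

lemma newton_nat:
  "(\<Sum>k\<in>{1..n}. pvar k * Qf (int n - int k)) = const (alpha * of_nat n) * Qf (int n)"
proof -
  have e: "const (of_nat k) * (pvar k * dp k (Qf (int n))) = const (inverse alpha) * (pvar k * Qf (int n - int k))"
    if k: "k \<in> {1..n}" for k
  proof -
    have "(of_nat k :: F) * inverse (alpha * of_nat k) = inverse alpha"
      using k by (simp add: inverse_mult_distrib)
    have f2: "(of_nat k :: F) * inverse alpha * inverse (of_nat k) = inverse alpha"
      using k by simp
    show ?thesis using k f2
      by (simp add: f2 dp_Qf_nat mult.left_commute[of "pvar k"] mult.assoc[symmetric] flip: const_mult)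
  qed
  have "const (inverse alpha) * (\<Sum>k\<in>{1..n}. pvar k * Qf (int n - int k)) = const (of_nat n) * Qf (int n)"
    using euler[of n] by (simp add: e sum_distrib_left)
  then have "const alpha * (const (inverse alpha) * (\<Sum>k\<in>{1..n}. pvar k * Qf (int n - int k))) = const alpha * (const (of_nat n) * Qf (int n))"
    by simp
  then show ?thesis using alpha_nz by (simp add: mult.assoc[symmetric] flip: const_mult)
qed

lemma dp_Qf:
  assumes k: "k \<ge> 1"
  shows "dp k (Qf x) = const (inverse (alpha * of_nat k)) * Qf (x - int k)"
proof (cases "x < 0")
  case True then show ?thesis by (simp add: Qf_neg)
next
  case False
  then obtain n where "x = int n" by (metis nonneg_int_cases not_less)
  then show ?thesis using dp_Qf_nat[OF k] by simp
qed

lemma newton: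
  assumes "x \<le> int N"
  shows "(\<Sum>k\<in>{1..N}. pvar k * Qf (x - int k)) = const (alpha * of_int x) * Qf x"
proof (cases "x < 0")
  case True then show ?thesis by (simp add: Qf_neg)
next
  case False
  then obtain n where x: "x = int n" by (metis nonneg_int_cases not_less)
  then have nN: "n \<le> N" using assms by simp
  have "(\<Sum>k\<in>{1..N}. pvar k * Qf (x - int k)) = (\<Sum>k\<in>{1..n}. pvar k * Qf (x - int k))"
    by (rule sum.mono_neutral_right) (use nN x in \<open>auto simp: Qf_neg\<close>)
  then show ?thesis using newton_nat[of n] x by simp
qed


definition bnd :: "nat \<Rightarrow> sym \<Rightarrow> bool" where
  "bnd N f \<longleftrightarrow> (\<forall>k>N. dp k f = 0)"

definition T1 :: "nat \<Rightarrow> sym \<Rightarrow> sym" where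
  "T1 N f = (\<Sum>i\<in>{1..N}. \<Sum>j\<in>{1..N}. const (of_nat (i + j) * alpha) * (pvar i * pvar j * dp (i + j) f))"
definition T2 :: "nat \<Rightarrow> sym \<Rightarrow> sym" where
  "T2 N f = (\<Sum>i\<in>{1..N}. \<Sum>j\<in>{1..N}. const (of_nat (i * j) * alpha ^ 2) * (pvar (i + j) * dp i (dp j f)))"
definition T3 :: "nat \<Rightarrow> sym \<Rightarrow> sym" where
  "T3 N f = const (alpha * (alpha - 1)) * (\<Sum>k\<in>{1..N}. const (of_nat (k ^ 2)) * (pvar k * dp k f))"
definition Dfin :: "nat \<Rightarrow> sym \<Rightarrow> sym" where
  "Dfin N f = T1 N f + T2 N f + T3 N f"
definition Bil :: "nat \<Rightarrow> sym \<Rightarrow> sym \<Rightarrow> sym" where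
  "Bil N f g = (\<Sum>i\<in>{1..N}. \<Sum>j\<in>{1..N}. const (of_nat (i * j) * alpha ^ 2) * (pvar (i + j) * (dp i f * dp j g)))"

lemma Sum_any_pairs:
  fixes N :: nat and g :: "nat \<times> nat \<Rightarrow> 'a::comm_monoid_add"
  assumes "\<And>i j. g (i, j) \<noteq> 0 \<Longrightarrow> i \<in> {1..N} \<and> j \<in> {1..N}"
  shows "Sum_any g = (\<Sum>i\<in>{1..N}. \<Sum>j\<in>{1..N}. g (i, j))"
proof -
  have "Sum_any g = sum g ({1..N} \<times> {1..N})"
  proof (rule Sum_any.expand_superset)
    show "finite ({1..N} \<times> {1..N})" by (intro finite_cartesian_product) simp_all
    show "{a. g a \<noteq> 0} \<subseteq> {1..N} \<times> {1..N}"
    proof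
      fix a assume "a \<in> {a. g a \<noteq> 0}"
      then have "g (fst a, snd a) \<noteq> 0" by simp
      then show "a \<in> {1..N} \<times> {1..N}" using assms[of "fst a" "snd a"] by (cases a) auto
    qed
  qed
  also have "\<dots> = (\<Sum>i\<in>{1..N}. \<Sum>j\<in>{1..N}. g (i, j))"
    by (simp add: sum.cartesian_product)
  finally show ?thesis .
qed

lemma Dop_Dfin:
  assumes b: "bnd N f"
  shows "Dop f = Dfin N f"
proof -
  have z: "k > N \<Longrightarrow> dp k f = 0" for k using b by (simp add: bnd_def)
  have z2: "i > N \<or> j > N \<Longrightarrow> dp i (dp j f) = 0" for i j
  proof (cases "j > N")
    case True then show ?thesis using z[of j] by simp
  next
    case False
    assume "i > N \<or> j > N"
    then have "i > N" using False by simp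
    then show ?thesis using z[of i] by (simp add: dp_commute[of i j])
  qed
  have s1: "Sum_any (\<lambda>(i, j). if 1 \<le> i \<and> 1 \<le> j
        then const (of_nat (i + j) * alpha) * (pvar i * pvar j * dp (i + j) f) else 0) = T1 N f"
    unfolding T1_def
  proof (subst Sum_any_pairs[of _ N])
    fix i j
    assume "(case (i, j) of (i, j) \<Rightarrow> if 1 \<le> i \<and> 1 \<le> j
        then const (of_nat (i + j) * alpha) * (pvar i * pvar j * dp (i + j) f) else 0) \<noteq> 0"
    then have "1 \<le> i" "1 \<le> j" "dp (i + j) f \<noteq> 0" by (auto split: if_splits)
    then show "i \<in> {1..N} \<and> j \<in> {1..N}" using z[of "i + j"] by fastforce
  qed (auto intro!: sum.cong)
  have s2: "Sum_any (\<lambda>(i, j). if 1 \<le> i \<and> 1 \<le> j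
        then const (of_nat (i * j) * alpha ^ 2) * (pvar (i + j) * dp i (dp j f)) else 0) = T2 N f"
    unfolding T2_def
  proof (subst Sum_any_pairs[of _ N])
    fix i j
    assume "(case (i, j) of (i, j) \<Rightarrow> if 1 \<le> i \<and> 1 \<le> j
        then const (of_nat (i * j) * alpha ^ 2) * (pvar (i + j) * dp i (dp j f)) else 0) \<noteq> 0"
    then have "1 \<le> i" "1 \<le> j" "dp i (dp j f) \<noteq> 0" by (auto split: if_splits)
    then show "i \<in> {1..N} \<and> j \<in> {1..N}" using z2[of i j] by fastforce
  qed (auto intro!: sum.cong)
  have s3: "Sum_any (\<lambda>k. if 1 \<le> k then const (of_nat (k ^ 2)) * (pvar k * dp k f) else 0)
      = (\<Sum>k\<in>{1..N}. const (of_nat (k ^ 2)) * (pvar k * dp k f))"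
  proof (subst Sum_any.expand_superset[of "{1..N}"])
    show "{a. (if 1 \<le> a then const (of_nat (a ^ 2)) * (pvar a * dp a f) else 0) \<noteq> 0} \<subseteq> {1..N}"
    proof
      fix k assume "k \<in> {a. (if 1 \<le> a then const (of_nat (a ^ 2)) * (pvar a * dp a f) else 0) \<noteq> 0}"
      then have "1 \<le> k" "dp k f \<noteq> 0" by (auto split: if_splits)
      then show "k \<in> {1..N}" using z[of k] by fastforce
    qed
  qed (auto intro!: sum.cong)
  show ?thesis unfolding Dop_def Dfin_def s1 s2 s3 T3_def ..
qed


lemma T1_mult: "T1 N (f * g) = T1 N f * g + f * T1 N g"
proof -
  have pt: "c * (P * dp k (f * g)) = c * (P * dp k f) * g + f * (c * (P * dp k g))" for c P k
    by (simp add: dp_mult algebra_simps)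
  show ?thesis unfolding T1_def by (simp add: pt sum.distrib sum_distrib_left sum_distrib_right)
qed

lemma T3_mult: "T3 N (f * g) = T3 N f * g + f * T3 N g"
proof -
  have pt: "c * (P * dp k (f * g)) = c * (P * dp k f) * g + f * (c * (P * dp k g))" for c P k
    by (simp add: dp_mult algebra_simps)
  have "T3 N (f * g) = const (alpha * (alpha - 1)) * ((\<Sum>k\<in>{1..N}. const (of_nat (k ^ 2)) * (pvar k * dp k f)) * g
     + f * (\<Sum>k\<in>{1..N}. const (of_nat (k ^ 2)) * (pvar k * dp k g)))"
    unfolding T3_def by (simp add: pt sum.distrib sum_distrib_left sum_distrib_right)
  then show ?thesis unfolding T3_def by (simp add: algebra_simps)
qed

lemma Bil_swap: "(\<Sum>i\<in>{1..N}. \<Sum>j\<in>{1..N}. const (of_nat (i * j) * alpha ^ 2) * (pvar (i + j) * (dp j f * dp i g))) = Bil N f g"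
  unfolding Bil_def
  by (subst sum.swap) (rule sum.cong[OF refl], rule sum.cong[OF refl], simp add: mult.commute add.commute)

lemma T2_mult: "T2 N (f * g) = T2 N f * g + f * T2 N g + 2 * Bil N f g"
proof -
  have pt: "c * (P * dp i (dp j (f * g))) = c * (P * dp i (dp j f)) * g + f * (c * (P * dp i (dp j g)))
     + c * (P * (dp i f * dp j g)) + c * (P * (dp j f * dp i g))" for c P i j
    by (simp add: dp_mult dp_add algebra_simps)
  have "T2 N (f * g) = T2 N f * g + f * T2 N g + Bil N f g
      + (\<Sum>i\<in>{1..N}. \<Sum>j\<in>{1..N}. const (of_nat (i * j) * alpha ^ 2) * (pvar (i + j) * (dp j f * dp i g)))"
    unfolding T2_def Bil_def by (simp add: pt sum.distrib sum_distrib_left sum_distrib_right)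
  then show ?thesis unfolding Bil_swap by (simp add: algebra_simps)
qed

lemma Dfin_mult: "Dfin N (f * g) = Dfin N f * g + f * Dfin N g + 2 * Bil N f g"
  unfolding Dfin_def T1_mult T2_mult T3_mult by (simp add: algebra_simps)

lemma Bil_mult: "Bil N f (g * h) = Bil N f g * h + g * Bil N f h"
proof -
  have pt: "c * (P * (a * dp j (g * h))) = c * (P * (a * dp j g)) * h + g * (c * (P * (a * dp j h)))" for c P a j
    by (simp add: dp_mult algebra_simps)
  show ?thesis unfolding Bil_def by (simp add: pt sum.distrib sum_distrib_left sum_distrib_right)
qed

lemma Bil_1[simp]: "Bil N f 1 = 0"
  unfolding Bil_def by simp

lemma bnd_mult: "bnd N f \<Longrightarrow> bnd N g \<Longrightarrow> bnd N (f * g)"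
  by (simp add: bnd_def dp_mult)
lemma bnd_1: "bnd N 1" by (simp add: bnd_def)
lemma bnd_Qf: "x \<le> int N \<Longrightarrow> bnd N (Qf x)"
  by (auto simp: bnd_def dp_Qf Qf_neg)

lemma bnd_qlist: "\<forall>x\<in>set xs. x \<le> int N \<Longrightarrow> bnd N (qlist xs)"
  by (induction xs) (auto simp: qlist_def bnd_1 bnd_mult bnd_Qf)


lemma tri:
  fixes G :: "nat \<Rightarrow> sym"
  assumes z: "\<And>m. m > N \<Longrightarrow> G m = 0"
  shows "(\<Sum>i\<in>{1..N}. \<Sum>j\<in>{1..N}. G (i + j)) = (\<Sum>m\<in>{1..N}. of_nat (m - 1) * G m)"
proof -
  have inner: "(\<Sum>j\<in>{1..N}. G (i + j)) = (\<Sum>m\<in>{1..N}. if i < m then G m else 0)" for i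
  proof -
    have e: "(\<lambda>j. G (i + j)) = (\<lambda>j. G (j + i))" by (simp add: add.commute)
    have "(\<Sum>j\<in>{1..N}. G (i + j)) = (\<Sum>m\<in>{1 + i..N + i}. G m)"
      unfolding e by (rule sum.shift_bounds_cl_nat_ivl[symmetric])
    also have "\<dots> = (\<Sum>m\<in>{1 + i..N}. G m)"
      by (rule sum.mono_neutral_right) (auto simp: z)
    also have "{1 + i..N} = {m\<in>{1..N}. i < m}" by auto
    also have "(\<Sum>m\<in>{m\<in>{1..N}. i < m}. G m) = (\<Sum>m\<in>{1..N}. if i < m then G m else 0)"
      by (rule sum.inter_filter) simp
    finally show ?thesis .
  qed
  have "(\<Sum>i\<in>{1..N}. \<Sum>j\<in>{1..N}. G (i + j)) = (\<Sum>m\<in>{1..N}. \<Sum>i\<in>{1..N}. if i < m then G m else 0)"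
    unfolding inner by (rule sum.swap)
  also have "\<dots> = (\<Sum>m\<in>{1..N}. of_nat (m - 1) * G m)"
  proof (rule sum.cong[OF refl])
    fix m assume m: "m \<in> {1..N}"
    have "(\<Sum>i\<in>{1..N}. if i < m then G m else 0) = (\<Sum>i\<in>{i\<in>{1..N}. i < m}. G m)"
      by (rule sum.inter_filter[symmetric]) simp
    also have "{i\<in>{1..N}. i < m} = {1..<m}" using m by auto
    finally show "(\<Sum>i\<in>{1..N}. if i < m then G m else 0) = of_nat (m - 1) * G m" by simp
  qed
  finally show ?thesis .
qed


lemma const_cancel: "c1 * c2 = 1 \<Longrightarrow> const c1 * (A * (const c2 * B)) = A * B"
proof -
  assume h: "c1 * c2 = 1"
  have "const c1 * (A * (const c2 * B)) = const (c1 * c2) * (A * B)" by (simp add: const_mult ac_simps)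
  then show ?thesis using h by simp
qed

lemma DQ:
  assumes aN: "a \<le> N"
  shows "Dfin N (Qf (int a)) = const (alpha ^ 2 * of_nat a ^ 2 - alpha * of_nat a) * Qf (int a)"
proof -
  define G where "G m = pvar m * Qf (int a - int m)" for m
  have Gz: "m > N \<Longrightarrow> G m = 0" for m using aN by (simp add: G_def Qf_neg)
  define S where "S = (\<Sum>m\<in>{1..N}. G m)"
  define M where "M = (\<Sum>m\<in>{1..N}. of_nat m * G m)"
  have S: "S = const (alpha * of_nat a) * Qf (int a)"
    using newton[of "int a" N] aN by (simp add: S_def G_def)
  have t1: "T1 N (Qf (int a)) = const (alpha * of_nat a) * S - const alpha * M"
  proof -
    have a1: "const (of_nat (i + j) * alpha) * (pvar i * pvar j * dp (i + j) (Qf (int a)))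
        = pvar i * (pvar j * Qf (int a - int i - int j))" if "i \<ge> 1" for i j
    proof -
      have nz: "(of_nat (i + j) :: F) \<noteq> 0" using that by (simp del: of_nat_add)
      have "of_nat (i + j) * alpha * inverse (alpha * of_nat (i + j)) = (1::F)"
        using alpha_nz nz by (simp add: field_simps del: of_nat_add)
      then have "const (of_nat (i + j) * alpha) * (pvar i * pvar j * (const (inverse (alpha * of_nat (i + j))) * Qf (int a - int (i + j))))
          = pvar i * pvar j * Qf (int a - int (i + j))"
        by (rule const_cancel)
      then show ?thesis using that by (simp add: dp_Qf mult.assoc algebra_simps)
    qed
    have "T1 N (Qf (int a)) = (\<Sum>i\<in>{1..N}. \<Sum>j\<in>{1..N}. pvar i * (pvar j * Qf ((int a - int i) - int j)))"
      unfolding T1_def by (intro sum.cong refl a1) auto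
    also have "\<dots> = (\<Sum>i\<in>{1..N}. pvar i * (\<Sum>j\<in>{1..N}. pvar j * Qf ((int a - int i) - int j)))"
      by (simp only: sum_distrib_left)
    also have "\<dots> = (\<Sum>i\<in>{1..N}. pvar i * (const (alpha * of_int (int a - int i)) * Qf (int a - int i)))"
      by (rule sum.cong[OF refl]) (subst newton, use aN in auto)
    also have "\<dots> = (\<Sum>i\<in>{1..N}. const (alpha * of_nat a) * G i - const alpha * (of_nat i * G i))"
      by (rule sum.cong[OF refl]) (simp add: G_def algebra_simps const_diff const_mult const_of_nat)
    also have "\<dots> = const (alpha * of_nat a) * S - const alpha * M"
      by (simp add: S_def M_def sum_subtractf sum_distrib_left)
    finally show ?thesis .
  qed
  have t2: "T2 N (Qf (int a)) = M - S"
  proof -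
    have a2: "const (of_nat (i * j) * alpha ^ 2) * (pvar (i + j) * dp i (dp j (Qf (int a)))) = G (i + j)"
      if "i \<ge> 1" "j \<ge> 1" for i j
    proof -
      have "of_nat (i * j) * alpha ^ 2 * (inverse (alpha * of_nat j) * inverse (alpha * of_nat i)) = (1::F)"
        using alpha_nz that by (simp add: power2_eq_square field_simps)
      then have "const (of_nat (i * j) * alpha ^ 2) * (pvar (i + j) * (const (inverse (alpha * of_nat j) * inverse (alpha * of_nat i)) * Qf (int a - int j - int i)))
          = pvar (i + j) * Qf (int a - int j - int i)"
        by (rule const_cancel)
      moreover have "dp i (dp j (Qf (int a))) = const (inverse (alpha * of_nat j) * inverse (alpha * of_nat i)) * Qf (int a - int j - int i)"
        using that by (simp add: dp_Qf dp_cmult const_mult mult.assoc)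
      ultimately show ?thesis by (simp add: G_def algebra_simps)
    qed
    have "T2 N (Qf (int a)) = (\<Sum>i\<in>{1..N}. \<Sum>j\<in>{1..N}. G (i + j))"
      unfolding T2_def by (intro sum.cong refl a2) auto
    also have "\<dots> = (\<Sum>m\<in>{1..N}. of_nat (m - 1) * G m)" by (rule tri[OF Gz])
    also have "\<dots> = (\<Sum>m\<in>{1..N}. of_nat m * G m - G m)"
      by (rule sum.cong[OF refl]) (auto simp: of_nat_diff algebra_simps)
    also have "\<dots> = M - S" by (simp add: M_def S_def sum_subtractf)
    finally show ?thesis .
  qed
  have t3: "T3 N (Qf (int a)) = const (alpha - 1) * M"
  proof -
    have a3: "const (of_nat (k ^ 2)) * (pvar k * dp k (Qf (int a))) = const (inverse alpha) * (of_nat k * G k)"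
      if "k \<ge> 1" for k
    proof -
      have "of_nat (k ^ 2) * inverse (alpha * of_nat k) = (inverse alpha * of_nat k :: F)"
        using that alpha_nz by (simp add: power2_eq_square field_simps)
      then have "const (of_nat (k ^ 2)) * const (inverse (alpha * of_nat k)) = const (inverse alpha * of_nat k)"
        by (simp only: flip: const_mult)
      also have "\<dots> = const (inverse alpha) * of_nat k" by (simp only: const_mult const_of_nat)
      finally have ck: "const (of_nat (k ^ 2)) * const (inverse (alpha * of_nat k)) = const (inverse alpha) * of_nat k" .
      have ck': "const ((of_nat k)\<^sup>2) * const (inverse alpha * inverse (of_nat k)) = const (inverse alpha) * of_nat k"
        using ck by (simp add: inverse_mult_distrib)
      show ?thesis using that
        by (simp add: ck' dp_Qf G_def mult.assoc[symmetric] mult.commute[of _ "pvar k"] mult.left_commute[of _ "pvar k"])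
    qed
    have "T3 N (Qf (int a)) = const (alpha * (alpha - 1)) * (const (inverse alpha) * M)"
      unfolding T3_def M_def sum_distrib_left by (intro arg_cong[where f = "(*) _"] sum.cong refl a3) auto
    also have "\<dots> = const (alpha - 1) * M"
    proof -
      have h: "alpha * (alpha - 1) * inverse alpha = alpha - 1" using alpha_nz by (simp add: field_simps)
      have "const (alpha * (alpha - 1)) * (const (inverse alpha) * M) = const (alpha * (alpha - 1) * inverse alpha) * M"
        by (simp only: const_mult mult.assoc)
      then show ?thesis unfolding h .
    qed
    finally show ?thesis .
  qed
  have "Dfin N (Qf (int a)) = const (alpha * of_nat a) * S - S"
    unfolding Dfin_def t1 t2 t3 by (simp add: const_diff algebra_simps)
  also have "\<dots> = const (alpha ^ 2 * of_nat a ^ 2 - alpha * of_nat a) * Qf (int a)"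
    unfolding S by (simp add: const_diff const_mult power2_eq_square algebra_simps)
  finally show ?thesis .
qed


definition Xs :: "nat \<Rightarrow> nat \<Rightarrow> sym" where
  "Xs a b = (\<Sum>i\<in>{1..a}. \<Sum>j\<in>{1..b}. pvar (i + j) * (Qf (int a - int i) * Qf (int b - int j)))"

lemma Bil_QQ:
  assumes "a \<le> N" "b \<le> N"
  shows "Bil N (Qf (int a)) (Qf (int b)) = Xs a b"
proof -
  have t: "const (of_nat (i * j) * alpha ^ 2) * (pvar (i + j) * (dp i (Qf (int a)) * dp j (Qf (int b))))
      = pvar (i + j) * (Qf (int a - int i) * Qf (int b - int j))" if "i \<ge> 1" "j \<ge> 1" for i j
  proof -
    have "of_nat (i * j) * alpha ^ 2 * (inverse (alpha * of_nat i) * inverse (alpha * of_nat j)) = (1::F)"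
      using alpha_nz that by (simp add: power2_eq_square field_simps)
    then have "const (of_nat (i * j) * alpha ^ 2) * (pvar (i + j) * (const (inverse (alpha * of_nat i) * inverse (alpha * of_nat j)) * (Qf (int a - int i) * Qf (int b - int j))))
        = pvar (i + j) * (Qf (int a - int i) * Qf (int b - int j))"
      by (rule const_cancel)
    moreover have "dp i (Qf (int a)) * dp j (Qf (int b)) = const (inverse (alpha * of_nat i) * inverse (alpha * of_nat j)) * (Qf (int a - int i) * Qf (int b - int j))"
      using that by (simp add: dp_Qf const_mult ac_simps)
    ultimately show ?thesis by simp
  qed
  have "Bil N (Qf (int a)) (Qf (int b)) = (\<Sum>i\<in>{1..N}. \<Sum>j\<in>{1..N}. pvar (i + j) * (Qf (int a - int i) * Qf (int b - int j)))"
    unfolding Bil_def by (intro sum.cong refl t) auto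
  also have "\<dots> = (\<Sum>i\<in>{1..N}. \<Sum>j\<in>{1..b}. pvar (i + j) * (Qf (int a - int i) * Qf (int b - int j)))"
    by (intro sum.cong refl sum.mono_neutral_right) (use assms in \<open>auto simp: Qf_neg\<close>)
  also have "\<dots> = Xs a b"
    unfolding Xs_def by (intro sum.mono_neutral_right) (use assms in \<open>auto simp: Qf_neg\<close>)
  finally show ?thesis .
qed

lemma sum_split_first: "(\<Sum>k\<in>{1..Suc n}. f k) = f 1 + (\<Sum>k\<in>{1..n}. f (Suc k))"
proof -
  have "(\<Sum>k\<in>{1..Suc n}. f k) = f 1 + (\<Sum>k\<in>{Suc 1..Suc n}. f k)" by (rule sum.atLeast_Suc_atMost) simp
  also have "(\<Sum>k\<in>{Suc 1..Suc n}. f k) = (\<Sum>k\<in>{1..n}. f (Suc k))" by (rule sum.shift_bounds_cl_Suc_ivl)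
  finally show ?thesis .
qed

lemma Xs_diff:
  "Xs (Suc a) b = Xs a (Suc b) + const (alpha * of_nat (Suc b)) * (Qf (int a) * Qf (int (Suc b)))
     - const (alpha * of_nat (Suc a)) * (Qf (int (Suc a)) * Qf (int b))"
proof -
  define D where "D = (\<Sum>i\<in>{1..a}. \<Sum>j\<in>{1..b}. pvar (Suc (i + j)) * (Qf (int a - int i) * Qf (int b - int j)))"
  define A where "A = (\<Sum>j\<in>{1..b}. pvar (Suc j) * Qf (int b - int j))"
  define B where "B = (\<Sum>i\<in>{1..a}. pvar (Suc i) * Qf (int a - int i))"
  have A: "A = const (alpha * of_nat (Suc b)) * Qf (int (Suc b)) - pvar 1 * Qf (int b)"
  proof -
    have "(\<Sum>k\<in>{1..Suc b}. pvar k * Qf (int (Suc b) - int k)) = pvar 1 * Qf (int b) + A"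
      unfolding A_def by (simp only: sum_split_first) simp
    then show ?thesis using newton_nat[of "Suc b"] by (simp add: algebra_simps)
  qed
  have B: "B = const (alpha * of_nat (Suc a)) * Qf (int (Suc a)) - pvar 1 * Qf (int a)"
  proof -
    have "(\<Sum>k\<in>{1..Suc a}. pvar k * Qf (int (Suc a) - int k)) = pvar 1 * Qf (int a) + B"
      unfolding B_def by (simp only: sum_split_first) simp
    then show ?thesis using newton_nat[of "Suc a"] by (simp add: algebra_simps)
  qed
  have X1: "Xs (Suc a) b = Qf (int a) * A + D"
    unfolding Xs_def A_def D_def
    by (simp only: sum_split_first) (simp add: sum_distrib_left algebra_simps)
  have X2: "Xs a (Suc b) = B * Qf (int b) + D"
    unfolding Xs_def B_def D_def
    by (simp only: sum_split_first) (simp add: sum_distrib_right sum_distrib_left sum.distrib algebra_simps)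
  show ?thesis unfolding X1 X2 A B by (simp add: algebra_simps)
qed


definition cf :: "nat \<Rightarrow> nat \<Rightarrow> nat \<Rightarrow> F" where
  "cf a b k = alpha * (of_int (int a - int b) + 2 * of_nat k)"

lemma Xs_formula:
  "Xs a b = - (const (alpha * of_nat b) * (Qf (int a) * Qf (int b)))
     + (\<Sum>k\<in>{1..b}. const (cf a b k) * (Qf (int a + int k) * Qf (int b - int k)))"
proof (induction b arbitrary: a)
  case 0 show ?case by (simp add: Xs_def)
next
  case (Suc b)
  have cfe: "cf a (Suc b) (Suc k) = cf (Suc a) b k" for k by (simp add: cf_def algebra_simps)
  have ie: "Qf (int a + int (Suc k)) * Qf (int (Suc b) - int (Suc k)) = Qf (int (Suc a) + int k) * Qf (int b - int k)" for k
    by (simp add: algebra_simps)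
  have c1: "const (cf a (Suc b) 1) = const (alpha * of_nat (Suc a)) - const (alpha * of_nat b)"
    by (simp add: cf_def algebra_simps flip: const_diff)
  have "Xs a (Suc b) = Xs (Suc a) b - const (alpha * of_nat (Suc b)) * (Qf (int a) * Qf (int (Suc b)))
      + const (alpha * of_nat (Suc a)) * (Qf (int (Suc a)) * Qf (int b))"
    using Xs_diff[of a b] by (simp add: algebra_simps)
  also have "\<dots> = - (const (alpha * of_nat b) * (Qf (int (Suc a)) * Qf (int b)))
     + (\<Sum>k\<in>{1..b}. const (cf (Suc a) b k) * (Qf (int (Suc a) + int k) * Qf (int b - int k)))
     - const (alpha * of_nat (Suc b)) * (Qf (int a) * Qf (int (Suc b)))
      + const (alpha * of_nat (Suc a)) * (Qf (int (Suc a)) * Qf (int b))"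
    unfolding Suc.IH ..
  also have "\<dots> = - (const (alpha * of_nat (Suc b)) * (Qf (int a) * Qf (int (Suc b))))
     + (const (cf a (Suc b) 1) * (Qf (int (Suc a)) * Qf (int b))
     + (\<Sum>k\<in>{1..b}. const (cf a (Suc b) (Suc k)) * (Qf (int a + int (Suc k)) * Qf (int (Suc b) - int (Suc k)))))"
    unfolding cfe ie c1 by (simp add: algebra_simps)
  also have "\<dots> = - (const (alpha * of_nat (Suc b)) * (Qf (int a) * Qf (int (Suc b))))
     + (\<Sum>k\<in>{1..Suc b}. const (cf a (Suc b) k) * (Qf (int a + int k) * Qf (int (Suc b) - int k)))"
    by (subst sum_split_first) (simp add: add.commute)
  finally show ?case .
qed


lemma qlist_Cons: "qlist (x # xs) = Qf x * qlist xs" by (simp add: qlist_def)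
lemma const_numeral: "const (numeral n) = numeral n" by (simp add: const_def)
lemma qlist_Nil: "qlist [] = 1" by (simp add: qlist_def)

lemma Rop_first: "Rop (Suc 0) (Suc (Suc t)) k (a # rest) =
    Qf (int a + int k) * qlist ((map int rest)[t := int (rest ! t) - int k])"
  by (simp add: Rop_def qlist_Cons)

lemma Rop_shift: assumes "i \<ge> 1" "j \<ge> 1"
  shows "Rop (Suc i) (Suc j) k (a # rest) = Qf (int a) * Rop i j k rest"
proof -
  obtain i0 where i0: "i = Suc i0" using assms(1) by (cases i) auto
  obtain j0 where j0: "j = Suc j0" using assms(2) by (cases j) auto
  from i0 j0 show ?thesis by (simp add: Rop_def qlist_Cons)
qed

lemma e_lam_Cons: "e_lam (a # rest) = alpha ^ 2 * of_nat a ^ 2 - alpha * of_nat a + e_lam rest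
   - 2 * alpha * of_nat (\<Sum>t<length rest. rest ! t)"
proof -
  have s: "(\<Sum>i<length (a # rest). (i + 1) * (a # rest) ! i) = a + (\<Sum>i<length rest. (i + 1) * rest ! i) + (\<Sum>t<length rest. rest ! t)"
    unfolding length_Cons sum.lessThan_Suc_shift by (simp add: sum.distrib)
  have sl: "sum_list rest = (\<Sum>t<length rest. rest ! t)"
    by (simp add: sum_list_sum_nth atLeast0LessThan)
  show ?thesis unfolding e_lam_def s
    by (simp add: sl algebra_simps of_nat_diff)
qed

definition TT :: "nat list \<Rightarrow> sym" where
  "TT lam = (\<Sum>i\<in>{1..length lam}. \<Sum>j\<in>{i<..length lam}. \<Sum>k\<in>{1..lam ! (j - 1)}.
        const (2 * alpha * (of_int (int (lam ! (i - 1)) - int (lam ! (j - 1))) + 2 * of_nat k))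
        * Rop i j k lam)"

lemma sum_gt_shift: "(\<Sum>j\<in>{Suc i<..Suc n}. f j) = (\<Sum>j\<in>{i<..n}. f (Suc j))"
proof -
  have "{Suc i<..Suc n} = {Suc (Suc i)..Suc n}" "{i<..n} = {Suc i..n}" by auto
  then show ?thesis by (simp only: sum.shift_bounds_cl_Suc_ivl)
qed

lemma TT_Cons: "TT (a # rest) = (\<Sum>t<length rest. \<Sum>k\<in>{1..rest ! t}.
      const (2 * cf a (rest ! t) k) * (Qf (int a + int k) * qlist ((map int rest)[t := int (rest ! t) - int k])))
    + Qf (int a) * TT rest"
proof -
  let ?l = "length rest"
  let ?g = "\<lambda>i j. \<Sum>k\<in>{1..(a # rest) ! (j - 1)}.
        const (2 * alpha * (of_int (int ((a # rest) ! (i - 1)) - int ((a # rest) ! (j - 1))) + 2 * of_nat k))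
        * Rop i j k (a # rest)"
  have "TT (a # rest) = (\<Sum>j\<in>{1<..Suc ?l}. ?g 1 j) + (\<Sum>i\<in>{1..?l}. \<Sum>j\<in>{Suc i<..Suc ?l}. ?g (Suc i) j)"
    unfolding TT_def by (simp only: length_Cons sum_split_first)
  also have "(\<Sum>j\<in>{1<..Suc ?l}. ?g 1 j) = (\<Sum>t<?l. ?g 1 (Suc (Suc t)))"
  proof -
    have "(\<Sum>j\<in>{1<..Suc ?l}. ?g 1 j) = (\<Sum>j\<in>{0<..?l}. ?g 1 (Suc j))"
      using sum_gt_shift[where i=0 and n="?l" and f="?g 1"] by simp
    also have "{0<..?l} = {Suc 0..?l}" by auto
    also have "(\<Sum>j\<in>{Suc 0..?l}. ?g 1 (Suc j)) = (\<Sum>t<?l. ?g 1 (Suc (Suc t)))"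
      by (rule sum.atLeast1_atMost_eq)
    finally show ?thesis .
  qed
  also have "\<dots> = (\<Sum>t<length rest. \<Sum>k\<in>{1..rest ! t}.
      const (2 * cf a (rest ! t) k) * (Qf (int a + int k) * qlist ((map int rest)[t := int (rest ! t) - int k])))"
    by (intro sum.cong refl) (simp_all add: Rop_first cf_def mult.assoc)
  also have "(\<Sum>i\<in>{1..?l}. \<Sum>j\<in>{Suc i<..Suc ?l}. ?g (Suc i) j) = (\<Sum>i\<in>{1..?l}. \<Sum>j\<in>{i<..?l}. ?g (Suc i) (Suc j))"
    by (simp only: sum_gt_shift)
  also have "\<dots> = Qf (int a) * TT rest"
    unfolding TT_def sum_distrib_left
  proof (rule sum.cong[OF refl], rule sum.cong[OF refl])
    fix i j assume i: "i \<in> {1..?l}" and j: "j \<in> {i<..?l}"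
    have ij: "i \<ge> 1" "j \<ge> 1" using i j by auto
    obtain i0 where i0: "i = Suc i0" using ij(1) by (cases i) auto
    obtain j0 where j0: "j = Suc j0" using ij(2) by (cases j) auto
    have set: "{1..(a # rest) ! (Suc j - 1)} = {1..rest ! (j - 1)}" using j0 by simp
    have h: "const (2 * alpha * (of_int (int ((a # rest) ! (Suc i - 1)) - int ((a # rest) ! (Suc j - 1))) + 2 * of_nat k))
        * Rop (Suc i) (Suc j) k (a # rest) =
        Qf (int a) * (const (2 * alpha * (of_int (int (rest ! (i - 1)) - int (rest ! (j - 1))) + 2 * of_nat k)) * Rop i j k rest)"
      for k using Rop_shift[OF ij, of k a rest] i0 j0 by (simp add: ac_simps)
    show "?g (Suc i) (Suc j) = (\<Sum>k\<in>{1..rest ! (j - 1)}. Qf (int a) * (const (2 * alpha * (of_int (int (rest ! (i - 1)) - int (rest ! (j - 1))) + 2 * of_nat k)) * Rop i j k rest))"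
      unfolding set by (rule sum.cong[OF refl]) (rule h)
  qed
  finally show ?thesis by simp
qed


definition BT :: "nat \<Rightarrow> nat list \<Rightarrow> nat \<Rightarrow> sym" where
  "BT a xs t = - (const (alpha * of_nat (xs ! t)) * (Qf (int a) * qlist (map int xs)))
     + (\<Sum>k\<in>{1..xs ! t}. const (cf a (xs ! t) k) * (Qf (int a + int k) * qlist ((map int xs)[t := int (xs ! t) - int k])))"

lemma BT_0: "BT a (b # ys) 0 = Xs a b * qlist (map int ys)"
  by (simp add: BT_def Xs_formula qlist_Cons sum_distrib_right sum_distrib_left algebra_simps)

lemma BT_Suc: "BT a (b # ys) (Suc t) = Qf (int b) * BT a ys t"
  by (simp add: BT_def qlist_Cons sum_distrib_left algebra_simps)

lemma BilQ_list:
  assumes "a \<le> N" "\<forall>x\<in>set xs. x \<le> N"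
  shows "Bil N (Qf (int a)) (qlist (map int xs)) = (\<Sum>t<length xs. BT a xs t)"
  using assms(2)
proof (induction xs)
  case Nil show ?case by (simp add: qlist_Nil)
next
  case (Cons b ys)
  have "Bil N (Qf (int a)) (qlist (map int (b # ys))) = Bil N (Qf (int a)) (Qf (int b)) * qlist (map int ys)
      + Qf (int b) * Bil N (Qf (int a)) (qlist (map int ys))"
    by (simp add: qlist_Cons Bil_mult)
  also have "\<dots> = BT a (b # ys) 0 + (\<Sum>t<length ys. BT a (b # ys) (Suc t))"
    using Cons assms(1) by (simp add: Bil_QQ BT_0 BT_Suc sum_distrib_left)
  also have "\<dots> = (\<Sum>t<length (b # ys). BT a (b # ys) t)"
    by (simp only: length_Cons sum.lessThan_Suc_shift)
  finally show ?case .
qed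

lemma Dfin_1: "Dfin N 1 = 0"
  by (simp add: Dfin_def T1_def T2_def T3_def)

lemma main_fin:
  assumes "\<forall>x\<in>set lam. x \<le> N"
  shows "Dfin N (qlist (map int lam)) = const (e_lam lam) * qlist (map int lam) + TT lam"
  using assms
proof (induction lam)
  case Nil show ?case by (simp add: qlist_Nil Dfin_1 e_lam_def TT_def)
next
  case (Cons a rest)
  let ?R = "qlist (map int rest)"
  let ?Q = "Qf (int a)"
  have aN: "a \<le> N" and rN: "\<forall>x\<in>set rest. x \<le> N" using Cons.prems by auto
  let ?S = "\<lambda>t. \<Sum>k\<in>{1..rest ! t}. const (cf a (rest ! t) k) * (Qf (int a + int k) * qlist ((map int rest)[t := int (rest ! t) - int k]))"
  have B: "Bil N ?Q ?R = (\<Sum>t<length rest. ?S t) - const (alpha * of_nat (\<Sum>t<length rest. rest ! t)) * (?Q * ?R)"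
    unfolding BilQ_list[OF aN rN] BT_def
    by (simp add: sum.distrib sum_subtractf const_sum sum_distrib_right sum_distrib_left of_nat_sum distrib_left algebra_simps)
  define s where "s = (\<Sum>t<length rest. rest ! t)"
  have B': "Bil N ?Q ?R = (\<Sum>t<length rest. ?S t) - const (alpha * of_nat s) * (?Q * ?R)"
    unfolding s_def by (rule B)
  have "Dfin N (qlist (map int (a # rest))) = Dfin N ?Q * ?R + ?Q * Dfin N ?R + 2 * Bil N ?Q ?R"
    by (simp add: qlist_Cons Dfin_mult)
  also have "\<dots> = const (alpha ^ 2 * of_nat a ^ 2 - alpha * of_nat a) * ?Q * ?R
      + ?Q * (const (e_lam rest) * ?R + TT rest)
      + 2 * ((\<Sum>t<length rest. ?S t) - const (alpha * of_nat s) * (?Q * ?R))"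
    unfolding B' DQ[OF aN] Cons.IH[OF rN] ..
  also have "\<dots> = const (e_lam (a # rest)) * qlist (map int (a # rest)) + TT (a # rest)"
    unfolding TT_Cons e_lam_Cons s_def[symmetric]
    by (simp add: qlist_Cons const_diff const_add const_mult const_numeral sum_distrib_left algebra_simps del: of_nat_sum)
  finally show ?case .
qed


theorem corollary4p4:
  fixes lam :: "nat list"
  assumes "is_partition lam"
  shows "Dop (qlist (map int lam)) =
     const (e_lam lam) * qlist (map int lam)
   + (\<Sum>i\<in>{1..length lam}. \<Sum>j\<in>{i<..length lam}. \<Sum>k\<in>{1..lam ! (j - 1)}.
        const (2 * alpha * (of_int (int (lam ! (i - 1)) - int (lam ! (j - 1))) + 2 * of_nat k))
        * Rop i j k lam)"
proof -
  define N where "N = sum_list lam"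
  have le: "\<forall>x\<in>set lam. x \<le> N" unfolding N_def using member_le_sum_list by blast
  then have "\<forall>x\<in>set (map int lam). x \<le> int N" by auto
  then have "bnd N (qlist (map int lam))" by (rule bnd_qlist)
  then have "Dop (qlist (map int lam)) = Dfin N (qlist (map int lam))" by (rule Dop_Dfin)
  also have "\<dots> = const (e_lam lam) * qlist (map int lam) + TT lam" by (rule main_fin[OF le])
  finally show ?thesis unfolding TT_def .
qed

end
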